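(* Let $m\in(0,1)$, $v\in(0,D(m))$, $M_0\in(m,1)$ and $V_0\in(0,D(M_0))$. If $F_{m,v}\preceq_{\text{ssd}}F_{M_0,V_0}$, then there exists $M>M_0$ with $V_0\le D(M)$ such that $F_{m,v}$ and $F_{M,V_0}$ are not comparable for $\preceq_{\text{ssd}}$.
   Context: $D(M)=M-M^2$. For $0<V<D(M)$, $F_{M,V}$ is the distribution function of the Beta$(\alpha,\beta)$ law with $\alpha=\frac{M(M-M^2-V)}{V}$, $\beta=\frac{(1-M)(M-M^2-V)}{V}$ (mean $M$, variance $V$); for $V=D(M)$, $F_{M,D(M)}(x)=1-M$ for $0\le x<1$ and $F_{M,D(M)}(1)=1$. $F_1\preceq_{\text{ssd}}F_2$ means $\int_0^xF_2(t)dt\le\int_0^xF_1(t)dt$ for all $x\in[0,1]$. *)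

theory Defs
  imports "HOL-Analysis.Analysis"
begin

definition D :: "real \<Rightarrow> real" where
  "D M = M - M\<^sup>2"

text \<open>Unnormalised Beta density and the Beta(a,b) distribution function on [0,1]
  (Henstock-Kurzweil integrals; for x > 1 the value is 1, for x < 0 it is 0).\<close>
definition beta_dens :: "real \<Rightarrow> real \<Rightarrow> real \<Rightarrow> real" where
  "beta_dens a b t = t powr (a - 1) * (1 - t) powr (b - 1)"

definition beta_cdf :: "real \<Rightarrow> real \<Rightarrow> real \<Rightarrow> real" where
  "beta_cdf a b x = integral {0..min x 1} (beta_dens a b) / integral {0..1} (beta_dens a b)"

definition F :: "real \<Rightarrow> real \<Rightarrow> real \<Rightarrow> real" where
  "F M V x =
     (if V = D M then (if x < 0 then 0 else if x < 1 then 1 - M else 1)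
      else beta_cdf (M * (M - M\<^sup>2 - V) / V) ((1 - M) * (M - M\<^sup>2 - V) / V) x)"

definition ssd :: "(real \<Rightarrow> real) \<Rightarrow> (real \<Rightarrow> real) \<Rightarrow> bool" where
  "ssd F1 F2 \<longleftrightarrow> (\<forall>x\<in>{0..1}. integral {0..x} F2 \<le> integral {0..x} F1)"

end

theory Submission
  imports Defs
begin

lemma Beta_pos_real: "a > 0 \<Longrightarrow> b > 0 \<Longrightarrow> Beta a b > (0::real)"
  by (simp add: Beta_altdef rGamma_inverse_Gamma)

lemma beta_int: "a > 0 \<Longrightarrow> b > 0 \<Longrightarrow> (beta_dens a b has_integral Beta a b) {0..1}"
  unfolding beta_dens_def by (rule has_integral_Beta_real)

lemma beta_cdf_eq:
  assumes "a > 0" "b > 0" "x \<le> 1"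
  shows "beta_cdf a b x = integral {0..x} (beta_dens a b) / Beta a b"
  using assms beta_int[OF assms(1,2)] unfolding beta_cdf_def
  by (simp add: integral_unique)

lemma beta_mean:
  assumes a: "a > 0" and b: "b > 0"
  shows "integral {0..1} (beta_cdf a b) = b / (a + b)"
proof -
  define f where "f = beta_dens a b"
  define H where "H = (\<lambda>x. integral {0..x} f)"
  define K where "K = (\<lambda>x. (x - 1) * H x)"
  have fint: "f integrable_on {0..1}" using beta_int[OF a b] f_def by blast
  have Hc: "continuous_on {0..1} H" unfolding H_def by (rule indefinite_integral_continuous_1[OF fint])
  have Kc: "continuous_on {0..1} K" unfolding K_def
    by (intro continuous_intros Hc)
  have Kd: "(K has_vector_derivative (H x + (x - 1) * f x)) (at x)" if x: "x \<in> {0<..<1} - {}" for x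
  proof -
    have fcont: "continuous (at x) f"
      using x unfolding f_def beta_dens_def
      by (auto intro!: continuous_intros)
    have "(H has_vector_derivative f x) (at x within ({0..1} - {}))"
      unfolding H_def
      by (rule integral_has_vector_derivative_continuous_at[OF fint])
         (use x fcont in \<open>auto intro: continuous_at_imp_continuous_within\<close>)
    moreover have "at x within ({0..1} - {}) = at x"
      using x by (intro at_within_interior) auto
    ultimately have "(H has_vector_derivative f x) (at x)" by metis
    then have Hd: "(H has_real_derivative f x) (at x)"
      by (simp add: has_real_derivative_iff_has_vector_derivative)
    have l: "((\<lambda>x. x - 1) has_real_derivative 1) (at x)"
      by (auto intro!: derivative_eq_intros)
    have "(K has_real_derivative (1 * H x + (x - 1) * f x)) (at x)"
      unfolding K_def using DERIV_mult[OF l Hd] by (simp add: algebra_simps)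
    then show ?thesis by (simp add: has_real_derivative_iff_has_vector_derivative)
  qed
  have "((\<lambda>x. H x + (x - 1) * f x) has_integral (K 1 - K 0)) {0..1}"
    by (rule fundamental_theorem_of_calculus_interior_strong[of "{}"]) (use Kd Kc in auto)
  moreover have "K 1 - K 0 = 0" unfolding K_def H_def by simp
  ultimately have I1: "((\<lambda>x. H x + (x - 1) * f x) has_integral 0) {0..1}" by simp
  have "((\<lambda>t. t powr (a - 1) * (1 - t) powr (b + 1 - 1)) has_integral Beta a (b + 1)) {0..1}"
    by (rule has_integral_Beta_real) (use a b in auto)
  moreover have "t powr (a - 1) * (1 - t) powr (b + 1 - 1) = (1 - t) * f t" if "t \<in> {0..1}" for t
  proof (cases "t = 1")
    case True then show ?thesis using b by simp
  next
    case False
    then have "1 - t > 0" using that by auto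
    then have "(1 - t) powr (b + 1 - 1) = (1 - t) * (1 - t) powr (b - 1)"
      using powr_add[of "1-t" "b-1" 1] by simp
    then show ?thesis unfolding f_def beta_dens_def by simp
  qed
  ultimately have I2: "((\<lambda>t. (1 - t) * f t) has_integral Beta a (b + 1)) {0..1}"
    using has_integral_cong by (metis (no_types, lifting))
  have "((\<lambda>x. (H x + (x - 1) * f x) + (1 - x) * f x) has_integral (0 + Beta a (b + 1))) {0..1}"
    by (rule has_integral_add[OF I1 I2])
  then have "(H has_integral Beta a (b + 1)) {0..1}" by (simp add: algebra_simps)
  then have "((\<lambda>x. H x / Beta a b) has_integral Beta a (b + 1) / Beta a b) {0..1}"
    by (rule has_integral_divide)
  moreover have "beta_cdf a b x = H x / Beta a b" if "x \<in> {0..1}" for x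
    using that beta_cdf_eq[OF a b] unfolding H_def f_def by simp
  ultimately have "(beta_cdf a b has_integral Beta a (b + 1) / Beta a b) {0..1}"
    using has_integral_cong by (metis (no_types, lifting))
  then have "integral {0..1} (beta_cdf a b) = Beta a (b + 1) / Beta a b" by (rule integral_unique)
  also have "\<dots> = b / (a + b)"
  proof -
    have "(a + b) * Beta a (b + 1) = b * Beta a b"
      by (rule Beta_plus1_right) (use b in \<open>auto elim!: nonpos_Ints_cases\<close>)
    moreover have "Beta a b > 0" "a + b > 0" using Beta_pos_real[OF a b] a b by auto
    ultimately show ?thesis by (simp add: field_simps)
  qed
  finally show ?thesis .
qed

lemma beta_small:
  assumes a: "a > 0" and b: "b > 0" and c: "c > 0"
  shows "\<exists>x. 0 < x \<and> x < 1 \<and> integral {0..x} (beta_cdf a b) < c * x"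
proof -
  define f where "f = beta_dens a b"
  define G where "G = (\<lambda>x. integral {0..x} f / Beta a b)"
  have fint: "f integrable_on {0..1}" using beta_int[OF a b] f_def by blast
  have Gc: "continuous_on {0..1} G" unfolding G_def
    using Beta_pos_real[OF a b]
    by (intro continuous_intros indefinite_integral_continuous_1[OF fint]) auto
  have G0: "G 0 = 0" unfolding G_def by simp
  have "continuous (at 0 within {0..1}) G"
    using Gc by (simp add: continuous_on_eq_continuous_within)
  then obtain d where d: "d > 0" "\<And>t. t \<in> {0..1} \<Longrightarrow> dist t 0 < d \<Longrightarrow> dist (G t) (G 0) < c/2"
    using c unfolding continuous_within_eps_delta by (metis half_gt_zero)
  define x where "x = min (d/2) (1/2)"
  have x: "0 < x" "x < 1" "x < d" using d unfolding x_def by auto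
  have eq: "beta_cdf a b t = G t" if "t \<in> {0..x}" for t
    using that x beta_cdf_eq[OF a b, of t] unfolding G_def f_def by auto
  have Gx: "G integrable_on {0..x}"
    by (rule integrable_continuous_interval, rule continuous_on_subset[OF Gc]) (use x in auto)
  have bi: "beta_cdf a b integrable_on {0..x}"
    using Gx integrable_cong[of "{0..x}" "beta_cdf a b" G] eq by blast
  have "integral {0..x} (beta_cdf a b) \<le> integral {0..x} (\<lambda>_. c/2)"
  proof (rule integral_le[OF bi])
    show "(\<lambda>_. c/2) integrable_on {0..x}"
      by (rule integrable_continuous_interval) (rule continuous_on_const)
    fix t assume t: "t \<in> {0..x}"
    have "dist (G t) (G 0) < c/2" using d(2)[of t] t x by (auto simp: dist_real_def)
    then show "beta_cdf a b t \<le> c/2" using eq[OF t] G0 by (auto simp: dist_real_def)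
  qed
  also have "\<dots> = c/2 * x" using x by simp
  also have "\<dots> < c * x" using c x by simp
  finally show ?thesis using x by blast
qed

theorem corollary7:
  fixes m v M0 V0 :: real
  assumes "0 < m" "m < 1" "0 < v" "v < D m"
    and "m < M0" "M0 < 1" "0 < V0" "V0 < D M0"
    and "ssd (F m v) (F M0 V0)"
  shows "\<exists>M > M0. V0 \<le> D M \<and> \<not> ssd (F m v) (F M V0) \<and> \<not> ssd (F M V0) (F m v)"
proof -
  define s where "s = sqrt (1 - 4 * V0)"
  define M where "M = (1 + s) / 2"
  have q: "D M0 \<le> 1/4" unfolding D_def 
    using sum_power2_ge_zero[of "M0 - 1/2" 0] by (simp add: power2_eq_square algebra_simps)
  have s0: "s > 0" unfolding s_def using assms(8) q by simp
  have s2: "s^2 = 1 - 4 * V0" unfolding s_def using assms(8) q by simp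
  have s1: "s < 1" unfolding s_def using assms(7) by simp
  have DM: "D M = V0" unfolding D_def M_def using s2 by (simp add: power2_eq_square field_simps)
  have MM0: "M > M0"
  proof (rule ccontr)
    assume "\<not> M > M0"
    then have "M \<le> M0" by simp
    moreover have "D M0 - D M = (M - M0) * (M + M0 - 1)" unfolding D_def by (simp add: power2_eq_square algebra_simps)
    moreover have "M + M0 - 1 > 0" using \<open>M \<le> M0\<close> s0 unfolding M_def by (simp add: field_simps)
    ultimately have "D M0 - D M \<le> 0" by (simp add: mult_nonpos_nonneg)
    then show False using DM assms(8) by simp
  qed
  have M1: "M < 1" unfolding M_def using s1 by simp
  have FM: "F M V0 t = (if t < 0 then 0 else if t < 1 then 1 - M else 1)" for t
    unfolding F_def using DM by simp
  have IM: "integral {0..x} (F M V0) = (1 - M) * x" if "0 \<le> x" "x < 1" for x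
  proof -
    have "integral {0..x} (F M V0) = integral {0..x::real} (\<lambda>_. 1 - M)"
      by (rule integral_cong) (use that in \<open>auto simp: FM\<close>)
    then show ?thesis using that by simp
  qed
  have IM1: "integral {0..1} (F M V0) = 1 - M"
  proof -
    have "integral {0..1} (F M V0) = integral {0..1::real} (\<lambda>_. 1 - M)"
      by (rule sym, rule integral_spike[where S="{1}"]) (auto simp: FM)
    then show ?thesis by simp
  qed
  define a where "a = m * (m - m\<^sup>2 - v) / v"
  define b where "b = (1 - m) * (m - m\<^sup>2 - v) / v"
  have p: "m - m\<^sup>2 - v > 0" using assms(4) unfolding D_def by simp
  have a0: "a > 0" unfolding a_def using p assms by simp
  have b0: "b > 0" unfolding b_def using p assms by simp
  have Fm: "F m v = beta_cdf a b"
    using assms(4) unfolding F_def a_def b_def by (auto simp: fun_eq_iff)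
  have ab: "b / (a + b) = 1 - m"
  proof -
    define P where "P = m - m\<^sup>2 - v"
    have P: "P > 0" using p P_def by simp
    have "a + b = P / v" unfolding a_def b_def P_def[symmetric]
      by (simp add: add_divide_distrib[symmetric] algebra_simps)
    then show ?thesis unfolding b_def P_def[symmetric] using P assms(3) by simp
  qed
  have Im1: "integral {0..1} (F m v) = 1 - m"
    using beta_mean[OF a0 b0] ab Fm by simp
  obtain x where x: "0 < x" "x < 1" "integral {0..x} (beta_cdf a b) < (1 - M) * x"
    using beta_small[OF a0 b0, of "1 - M"] M1 by auto
  have n1: "\<not> ssd (F m v) (F M V0)"
  proof
    assume "ssd (F m v) (F M V0)"
    then have "integral {0..x} (F M V0) \<le> integral {0..x} (F m v)"
      unfolding ssd_def using x by auto
    then show False using x IM[of x] Fm by simp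
  qed
  have n2: "\<not> ssd (F M V0) (F m v)"
  proof
    assume "ssd (F M V0) (F m v)"
    then have "integral {0..1} (F m v) \<le> integral {0..1} (F M V0)"
      unfolding ssd_def by auto
    then show False using Im1 IM1 MM0 assms(5) by simp
  qed
  show ?thesis using MM0 DM n1 n2 by auto
qed

end
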